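(* Let $(M,g)$ be a 5-dimensional Lorentzian manifold, $p\in M$, and suppose the Weyl tensor at $p$ is of alignment type N: there is a null frame $(\ell,n,m_3,m_4,m_5)$ in which the only non-vanishing Weyl components are $C_{1i1j}=:\check H_{ij}$ (a nonzero symmetric traceless $3\times3$ matrix). Let $\mathsf C$ be the Weyl operator $F^{ab}\mapsto\tfrac12 C^{ab}{}_{cd}F^{cd}$ on $\wedge^2T_pM$. Then $\mathsf C^2=0$, $\operatorname{rank}\mathsf C=\operatorname{rank}\check H\in\{2,3\}$, and: (i) if $\operatorname{rank}\check H=3$ (all eigenvalues of $\check H$ nonzero), the Jordan normal form of $\mathsf C$ consists of three Jordan blocks of size 2 and four of size 1 (Segre type $[(2221111)]$); (ii) if $\operatorname{rank}\check H=2$, equivalently the eigenvalues of $\check H$ are $\{a,-a,0\}$ with $a\neq0$, the Jordan normal form of $\mathsf C$ consists of two Jordan blocks of size 2 and six of size 1 (Segre type $[(22111111)]$), all with eigenvalue $0$.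
   Context: A null frame $(\ell,n,m_i)$, $i=3,4,5$, consists of null vectors $\ell,n$ with $g(\ell,n)=1$ and orthonormal spacelike $m_i$ orthogonal to $\ell,n$; frame index $0$ refers to $\ell$, $1$ to $n$. $\wedge^2T_pM$ is the 10-dimensional space of contravariant bivectors at $p$. *)

theory Defs
  imports "Jordan_Normal_Form.Jordan_Normal_Form" "Jordan_Normal_Form.DL_Rank"
begin

(* Coordinates w.r.t. the null frame (l, n, m3, m4, m5) at p:
   frame index 0 = l, 1 = n, 2 = m3, 3 = m4, 4 = m5.
   The metric in this frame: g(l,n) = 1, g(m_i,m_i) = 1, all else 0;
   its inverse g^{ab} has the same components. *)

definition ginv :: "nat \<Rightarrow> nat \<Rightarrow> real" where
  "ginv a b = (if (a = 0 \<and> b = 1) \<or> (a = 1 \<and> b = 0) \<or> (a = b \<and> 2 \<le> a \<and> a < 5) then 1 else 0)"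

(* Auxiliary: for an index pair (a,b), returns (sign, i) such that the pair
   is sign * (1, m_{i+3}) up to antisymmetry, or sign 0 otherwise. *)
definition npair :: "nat \<Rightarrow> nat \<Rightarrow> real \<times> nat" where
  "npair a b = (if a = 1 \<and> 2 \<le> b \<and> b < 5 then (1, b - 2)
               else if b = 1 \<and> 2 \<le> a \<and> a < 5 then (-1, a - 2)
               else (0, 0))"

(* Weyl tensor C_{abcd} (all indices down) of type N in the null frame:
   the only non-vanishing components are C_{1i1j} = H_{ij} and those
   obtained from them by the Weyl-tensor symmetries. *)
definition weylN :: "real mat \<Rightarrow> nat \<Rightarrow> nat \<Rightarrow> nat \<Rightarrow> nat \<Rightarrow> real" where
  "weylN H a b c d = fst (npair a b) * fst (npair c d) * H $$ (snd (npair a b), snd (npair c d))"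

definition bivectors :: "(nat \<Rightarrow> nat \<Rightarrow> real) set" where
  "bivectors = {F. (\<forall>a b. F a b = - F b a) \<and> (\<forall>a b. 5 \<le> a \<or> 5 \<le> b \<longrightarrow> F a b = 0)}"

definition weyl_op :: "real mat \<Rightarrow> (nat \<Rightarrow> nat \<Rightarrow> real) \<Rightarrow> (nat \<Rightarrow> nat \<Rightarrow> real)" where
  "weyl_op H F = (\<lambda>a b. 1/2 * (\<Sum>c<5. \<Sum>d<5.
      (\<Sum>e<5. \<Sum>f<5. ginv a e * ginv b f * weylN H e f c d) * F c d))"

definition bv_pairs :: "(nat \<times> nat) list" where
  "bv_pairs = concat (map (\<lambda>a. map (\<lambda>b. (a, b)) [Suc a..<5]) [0..<5])"

definition bv_basis :: "nat \<Rightarrow> (nat \<Rightarrow> nat \<Rightarrow> real)" where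
  "bv_basis k = (\<lambda>a b. if (a, b) = bv_pairs ! k then 1
                        else if (b, a) = bv_pairs ! k then -1 else 0)"

definition weyl_mat :: "real mat \<Rightarrow> real mat" where
  "weyl_mat H = mat 10 10 (\<lambda>(i, j). weyl_op H (bv_basis j) (fst (bv_pairs ! i)) (snd (bv_pairs ! i)))"

end

theory Submission
  imports Defs "Jordan_Normal_Form.DL_Rank_Submatrix"
begin


lemma det2: assumes "A \<in> carrier_mat 2 2"
  shows "det A = A$$(0,0) * A$$(1,1) - A$$(0,1) * A$$(1,0)"
proof -
  have "det A = (\<Sum>i<2. A $$ (i,0) * cofactor A i 0)"
    by (rule laplace_expansion_column[OF assms], simp)
  also have "\<dots> = A$$(0,0) * A$$(1,1) - A$$(0,1) * A$$(1,0)"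
    using assms
    by (simp add: numeral_2_eq_2 cofactor_def det_single mat_delete_carrier mat_delete_def)
  finally show ?thesis .
qed

lemma det3: assumes "A \<in> carrier_mat 3 3"
  shows "det A = A$$(0,0) * (A$$(1,1) * A$$(2,2) - A$$(1,2) * A$$(2,1))
     - A$$(1,0) * (A$$(0,1) * A$$(2,2) - A$$(0,2) * A$$(2,1))
     + A$$(2,0) * (A$$(0,1) * A$$(1,2) - A$$(0,2) * A$$(1,1))"
proof -
  have "det A = (\<Sum>i<3. A $$ (i,0) * cofactor A i 0)"
    by (rule laplace_expansion_column[OF assms], simp)
  also have "\<dots> = A$$(0,0) * (A$$(1,1) * A$$(2,2) - A$$(1,2) * A$$(2,1))
     - A$$(1,0) * (A$$(0,1) * A$$(2,2) - A$$(0,2) * A$$(2,1))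
     + A$$(2,0) * (A$$(0,1) * A$$(1,2) - A$$(0,2) * A$$(1,1))"
    using assms
    apply (simp add: numeral_3_eq_3 cofactor_def)
    apply (subst (1 2 3) det2)
    apply (auto simp: mat_delete_def numeral_2_eq_2 algebra_simps)
    done
  finally show ?thesis .
qed


definition Wm :: "real mat \<Rightarrow> real mat" where
 "Wm H = mat 10 10 (\<lambda>(i,j). if 1 \<le> i \<and> i < 4 \<and> 4 \<le> j \<and> j < 7 then H $$ (i-1, j-4) else 0)"

definition sw :: "nat \<Rightarrow> nat" where "sw a = (if a = 0 then 1 else if a = 1 then 0 else a)"

lemma bv_pairs_eq: "bv_pairs = [(0,1),(0,2),(0,3),(0,4),(1,2),(1,3),(1,4),(2,3),(2,4),(3,4)]"
  by (simp add: bv_pairs_def upt_rec)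

lemma sum5: "(\<Sum>e<(5::nat). f e) = f 0 + f 1 + f 2 + f 3 + (f 4 :: real)"
  by (simp add: eval_nat_numeral)

lemma ginv_sum: "a < 5 \<Longrightarrow> (\<Sum>e<5. ginv a e * X e) = X (sw a)"
proof -
  assume "a < 5" hence "a = 0 \<or> a = 1 \<or> a = 2 \<or> a = 3 \<or> a = 4" by auto
  thus ?thesis unfolding sum5 ginv_def sw_def by auto
qed

lemma bv_sum: assumes "bv_pairs ! j = (c0,d0)" "c0 < d0" "d0 < 5"
  shows "(\<Sum>c<5. \<Sum>d<5. G c d * bv_basis j c d) = G c0 d0 - (G d0 c0 :: real)"
proof -
  have "\<And>c. (\<Sum>d<5. G c d * bv_basis j c d) = (if c = c0 then G c0 d0 else 0) - (if c = d0 then G d0 c0 else 0)"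
    using assms unfolding bv_basis_def by (auto simp: if_distrib sum.If_cases)
  hence "(\<Sum>c<5. \<Sum>d<5. G c d * bv_basis j c d) = (\<Sum>c<5. (if c = c0 then G c0 d0 else 0) - (if c = d0 then G d0 c0 else 0))"
    by simp
  also have "\<dots> = G c0 d0 - G d0 c0" using assms by (simp add: sum_subtractf)
  finally show ?thesis .
qed

lemma weyl_op_eq: "a < 5 \<Longrightarrow> b < 5 \<Longrightarrow> weyl_op H F a b =
   1/2 * (\<Sum>c<5. \<Sum>d<5. weylN H (sw a) (sw b) c d * F c d)"
proof -
  assume a: "a < 5" and b: "b < 5"
  have "\<And>c d. (\<Sum>e<5. \<Sum>f<5. ginv a e * ginv b f * weylN H e f c d) = weylN H (sw a) (sw b) c d"
  proof -
    fix c d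
    have "(\<Sum>e<5. \<Sum>f<5. ginv a e * ginv b f * weylN H e f c d)
       = (\<Sum>e<5. ginv a e * (\<Sum>f<5. ginv b f * weylN H e f c d))"
      by (simp add: sum_distrib_left mult.assoc)
    also have "\<dots> = (\<Sum>e<5. ginv a e * weylN H e (sw b) c d)"
      using ginv_sum[OF b] by simp
    also have "\<dots> = weylN H (sw a) (sw b) c d" using ginv_sum[OF a] by simp
    finally show "?thesis c d" .
  qed
  then show ?thesis unfolding weyl_op_def by simp
qed

lemma weylN_anti: "weylN H a b d c = - weylN H a b c d"
  unfolding weylN_def npair_def by auto

lemma weylN_diag: "weylN H a b c c = 0"
  unfolding weylN_def npair_def by auto

lemma Wm_entry: "weylN H (sw (fst (bv_pairs!i))) (sw (snd (bv_pairs!i))) (fst (bv_pairs ! j)) (snd (bv_pairs ! j)) = Wm H $$ (i,j)"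
  if "i < 10" "j < 10"
proof -
  have i10: "i = 0 \<or> i = 1 \<or> i = 2 \<or> i = 3 \<or> i = 4 \<or> i = 5 \<or> i = 6 \<or> i = 7 \<or> i = 8 \<or> i = 9" using that by auto
  have j10: "j = 0 \<or> j = 1 \<or> j = 2 \<or> j = 3 \<or> j = 4 \<or> j = 5 \<or> j = 6 \<or> j = 7 \<or> j = 8 \<or> j = 9" using that by auto
  show ?thesis
  using i10 j10 unfolding bv_pairs_eq by (elim disjE; simp add: Wm_def weylN_def npair_def sw_def)
qed

lemma weyl_mat_eq: "weyl_mat H = Wm H"
proof (rule eq_matI)
  fix i j assume "i < dim_row (Wm H)" "j < dim_col (Wm H)"
  hence i: "i < 10" and j: "j < 10" by (auto simp: Wm_def)
  obtain c0 d0 where cd: "bv_pairs ! j = (c0,d0)" by force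
  have "c0 < d0 \<and> d0 < 5" using j cd unfolding bv_pairs_eq
    by (auto simp: nth_Cons split: nat.splits)
  moreover obtain a b where ab: "bv_pairs ! i = (a,b)" by force
  moreover have "a < b \<and> b < 5" using i ab unfolding bv_pairs_eq
    by (auto simp: nth_Cons split: nat.splits)
  ultimately have e: "weyl_mat H $$ (i,j) = weylN H (sw a) (sw b) c0 d0"
    using i j cd bv_sum[OF cd] 
    by (simp add: weyl_mat_def weyl_op_eq weylN_anti[of H _ _ d0 c0])
  show "weyl_mat H $$ (i,j) = Wm H $$ (i,j)"
    unfolding e using Wm_entry[OF i j] cd ab by simp
qed (auto simp: weyl_mat_def Wm_def)


definition J3 :: "real mat" where
  "J3 = mat 10 10 (\<lambda>(i,j). if (i = 0 \<and> j = 1) \<or> (i = 2 \<and> j = 3) \<or> (i = 4 \<and> j = 5) then 1 else 0)"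

lemma J3_eq: "jordan_matrix [(2,0),(2,0),(2,0),(1,0),(1,0),(1,0),(1,0)] = J3"
proof (rule eq_matI)
  fix i j assume "i < dim_row J3" "j < dim_col J3"
  hence i10: "i = 0 \<or> i = 1 \<or> i = 2 \<or> i = 3 \<or> i = 4 \<or> i = 5 \<or> i = 6 \<or> i = 7 \<or> i = 8 \<or> i = 9"
    and j10: "j = 0 \<or> j = 1 \<or> j = 2 \<or> j = 3 \<or> j = 4 \<or> j = 5 \<or> j = 6 \<or> j = 7 \<or> j = 8 \<or> j = 9" by (auto simp: J3_def)
  show "jordan_matrix [(2,0),(2,0),(2,0),(1,0),(1,0),(1,0),(1,0)] $$ (i,j) = J3 $$ (i,j)"
    using i10 j10 by (elim disjE; simp add: J3_def jordan_matrix_def Let_def)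
qed (auto simp: J3_def)

definition P3 :: "real mat \<Rightarrow> real mat" where
  "P3 H = mat 10 10 (\<lambda>(r,c). if (c = 0 \<or> c = 2 \<or> c = 4) \<and> 1 \<le> r \<and> r < 4 then H $$ (r-1, c div 2)
     else if (r,c) = (4,1) \<or> (r,c) = (5,3) \<or> (r,c) = (6,5) \<or> (r,c) = (0,6) \<or> (r,c) = (7,7) \<or> (r,c) = (8,8) \<or> (r,c) = (9,9) then 1 else 0)"

lemma sum10: "(\<Sum>k\<in>{0..<(10::nat)}. f k) = f 0 + f 1 + f 2 + f 3 + f 4 + f 5 + f 6 + f 7 + f 8 + (f 9 :: real)"
  by (simp add: eval_nat_numeral atLeast0LessThan)

lemma WP3: "Wm H * P3 H = P3 H * J3"
proof (rule eq_matI)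
  fix i j assume "i < dim_row (P3 H * J3)" "j < dim_col (P3 H * J3)"
  hence i10: "i = 0 \<or> i = 1 \<or> i = 2 \<or> i = 3 \<or> i = 4 \<or> i = 5 \<or> i = 6 \<or> i = 7 \<or> i = 8 \<or> i = 9"
    and j10: "j = 0 \<or> j = 1 \<or> j = 2 \<or> j = 3 \<or> j = 4 \<or> j = 5 \<or> j = 6 \<or> j = 7 \<or> j = 8 \<or> j = 9" by (auto simp: J3_def P3_def)
  show "(Wm H * P3 H) $$ (i,j) = (P3 H * J3) $$ (i,j)"
    using i10 j10 by (elim disjE; simp add: Wm_def P3_def J3_def scalar_prod_def sum10)
qed (auto simp: J3_def Wm_def P3_def)


lemma sim_from_intertwine:
  fixes W P J :: "'a :: field mat"
  assumes W: "W \<in> carrier_mat n n" and P: "P \<in> carrier_mat n n" and J: "J \<in> carrier_mat n n"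
    and inj: "\<And>v. v \<in> carrier_vec n \<Longrightarrow> P *\<^sub>v v = 0\<^sub>v n \<Longrightarrow> v = 0\<^sub>v n"
    and WP: "W * P = P * J"
  shows "similar_mat W J"
proof -
  have "det P \<noteq> 0" using det_0_iff_vec_prod_zero_field[OF P] inj by blast
  from det_non_zero_imp_unit[OF P this, unfolded Units_def, of "()"]
  obtain Q where Q: "Q \<in> carrier_mat n n" and QP: "Q * P = 1\<^sub>m n" and PQ: "P * Q = 1\<^sub>m n"
    by (auto simp: ring_mat_def)
  have "P * J * Q = W * P * Q" using WP by simp
  also have "\<dots> = W * (P * Q)" using W P Q by (simp add: assoc_mult_mat)
  also have "\<dots> = W" using PQ W by simp
  finally have "W = P * J * Q" by simp
  hence "similar_mat_wit W J P Q" unfolding similar_mat_wit_def Let_def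
    using W P J Q PQ QP by auto
  thus ?thesis unfolding similar_mat_def by blast
qed

lemma sum3: "(\<Sum>k\<in>{0..<(3::nat)}. f k) = f 0 + f 1 + (f 2 :: real)"
  by (simp add: eval_nat_numeral atLeast0LessThan)

lemma P3_inj: assumes H: "H \<in> carrier_mat 3 3" and dH: "det H \<noteq> 0"
  and v: "v \<in> carrier_vec 10" and Pv: "P3 H *\<^sub>v v = 0\<^sub>v 10"
  shows "v = 0\<^sub>v 10"
proof -
  have eq: "\<And>r. r < 10 \<Longrightarrow> (\<Sum>k\<in>{0..<(10::nat)}. P3 H $$ (r,k) * v $ k) = 0"
  proof -
    fix r :: nat assume r: "r < 10"
    have "(P3 H *\<^sub>v v) $ r = 0" using Pv r by simp
    thus "(\<Sum>k\<in>{0..<(10::nat)}. P3 H $$ (r,k) * v $ k) = 0"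
      using r v by (simp add: P3_def scalar_prod_def)
  qed
  have z1: "v$6 = 0" "v$1 = 0" "v$3 = 0" "v$5 = 0" "v$7 = 0" "v$8 = 0" "v$9 = 0"
    using eq[of 0] eq[of 4] eq[of 5] eq[of 6] eq[of 7] eq[of 8] eq[of 9] by (simp_all add: P3_def sum10)
  have r1: "H$$(0,0) * v$0 + H$$(0,1) * v$2 + H$$(0,2) * v$4 = 0"
   and r2: "H$$(1,0) * v$0 + H$$(1,1) * v$2 + H$$(1,2) * v$4 = 0"
   and r3: "H$$(2,0) * v$0 + H$$(2,1) * v$2 + H$$(2,2) * v$4 = 0"
    using eq[of 1] eq[of 2] eq[of 3] z1 by (simp_all add: P3_def sum10)
  define w where "w = vec 3 (\<lambda>i. if i = 0 then v$0 else if i = 1 then v$2 else v$4)"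
  have "H *\<^sub>v w = 0\<^sub>v 3"
  proof (rule eq_vecI)
    fix i assume "i < dim_vec (0\<^sub>v 3 :: real vec)"
    hence "i = 0 \<or> i = 1 \<or> i = 2" by auto
    thus "(H *\<^sub>v w) $ i = 0\<^sub>v 3 $ i" using H r1 r2 r3
      by (elim disjE; simp add: w_def scalar_prod_def sum3 algebra_simps)
  qed (use H in \<open>simp add: w_def\<close>)
  moreover have "w \<in> carrier_vec 3" by (simp add: w_def)
  ultimately have "w = 0\<^sub>v 3" using det_0_iff_vec_prod_zero_field[OF H] dH by blast
  hence "w$0 = 0" "w$1 = 0" "w$2 = 0" by simp_all
  hence "v$0 = 0" "v$2 = 0" "v$4 = 0" unfolding w_def by simp_all
  show ?thesis
  proof (rule eq_vecI)
    fix i assume "i < dim_vec (0\<^sub>v 10 :: real vec)"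
    hence "i = 0 \<or> i = 1 \<or> i = 2 \<or> i = 3 \<or> i = 4 \<or> i = 5 \<or> i = 6 \<or> i = 7 \<or> i = 8 \<or> i = 9" by auto
    thus "v $ i = 0\<^sub>v 10 $ i" using z1 \<open>v$0 = 0\<close> \<open>v$2 = 0\<close> \<open>v$4 = 0\<close> by auto
  qed (use v in auto)
qed

lemma jnf3: assumes H: "H \<in> carrier_mat 3 3" and dH: "det H \<noteq> 0"
  shows "jordan_nf (Wm H) [(2,0),(2,0),(2,0),(1,0),(1,0),(1,0),(1,0)]"
  unfolding jordan_nf_def J3_eq
proof
  show "similar_mat (Wm H) J3"
    by (rule sim_from_intertwine[OF _ _ _ P3_inj[OF H dH] WP3], auto simp: Wm_def P3_def J3_def)
qed simp


definition J2 :: "real mat" where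
  "J2 = mat 10 10 (\<lambda>(i,j). if (i = 0 \<and> j = 1) \<or> (i = 2 \<and> j = 3) then 1 else 0)"

lemma J2_eq: "jordan_matrix [(2,0),(2,0),(1,0),(1,0),(1,0),(1,0),(1,0),(1,0)] = J2"
proof (rule eq_matI)
  fix i j assume "i < dim_row J2" "j < dim_col J2"
  hence i10: "i = 0 \<or> i = 1 \<or> i = 2 \<or> i = 3 \<or> i = 4 \<or> i = 5 \<or> i = 6 \<or> i = 7 \<or> i = 8 \<or> i = 9"
    and j10: "j = 0 \<or> j = 1 \<or> j = 2 \<or> j = 3 \<or> j = 4 \<or> j = 5 \<or> j = 6 \<or> j = 7 \<or> j = 8 \<or> j = 9" by (auto simp: J2_def)
  show "jordan_matrix [(2,0),(2,0),(1,0),(1,0),(1,0),(1,0),(1,0),(1,0)] $$ (i,j) = J2 $$ (i,j)"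
    using i10 j10 by (elim disjE; simp add: J2_def jordan_matrix_def Let_def)
qed (auto simp: J2_def)

definition P2 :: "nat \<Rightarrow> nat \<Rightarrow> nat \<Rightarrow> real mat \<Rightarrow> (nat \<Rightarrow> real) \<Rightarrow> real mat" where
  "P2 p q m H z = mat 10 10 (\<lambda>(r,c).
     if c = 0 \<and> 1 \<le> r \<and> r < 4 then H $$ (r-1, p)
     else if c = 2 \<and> 1 \<le> r \<and> r < 4 then H $$ (r-1, q)
     else if c = 4 \<and> 4 \<le> r \<and> r < 7 then z (r-4)
     else if (r,c) = (4+p,1) \<or> (r,c) = (4+q,3) \<or> (r,c) = (1+m,5) \<or> (r,c) = (0,6) \<or> (r,c) = (7,7) \<or> (r,c) = (8,8) \<or> (r,c) = (9,9) then 1 else 0)"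

lemma WP2_012: fixes z :: "nat \<Rightarrow> real" assumes "H$$(0,0) * z 0 + H$$(0,1) * z 1 + H$$(0,2) * z 2 = 0"
  "H$$(1,0) * z 0 + H$$(1,1) * z 1 + H$$(1,2) * z 2 = 0"
  "H$$(2,0) * z 0 + H$$(2,1) * z 1 + H$$(2,2) * z 2 = 0"
  shows "Wm H * P2 0 1 2 H z = P2 0 1 2 H z * J2"
proof (rule eq_matI)
  fix i j assume "i < dim_row (P2 0 1 2 H z * J2)" "j < dim_col (P2 0 1 2 H z * J2)"
  hence i10: "i = 0 \<or> i = 1 \<or> i = 2 \<or> i = 3 \<or> i = 4 \<or> i = 5 \<or> i = 6 \<or> i = 7 \<or> i = 8 \<or> i = 9"
    and j10: "j = 0 \<or> j = 1 \<or> j = 2 \<or> j = 3 \<or> j = 4 \<or> j = 5 \<or> j = 6 \<or> j = 7 \<or> j = 8 \<or> j = 9" by (auto simp: J2_def P2_def)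
  show "(Wm H * P2 0 1 2 H z) $$ (i,j) = (P2 0 1 2 H z * J2) $$ (i,j)"
    using i10 j10 assms by (elim disjE; simp add: Wm_def P2_def J2_def scalar_prod_def sum10 algebra_simps)
qed (auto simp: J2_def Wm_def P2_def)

lemma P2_inj_012: fixes z :: "nat \<Rightarrow> real" assumes H: "H \<in> carrier_mat 3 3"
  and Mnz: "H$$(0,0) * H$$(1,1) - H$$(0,1) * H$$(1,0) \<noteq> 0" and zm: "z 2 \<noteq> 0"
  and v: "v \<in> carrier_vec 10" and Pv: "P2 0 1 2 H z *\<^sub>v v = 0\<^sub>v 10"
  shows "v = 0\<^sub>v 10"
proof -
  have eq: "\<And>r. r < 10 \<Longrightarrow> (\<Sum>k\<in>{0..<(10::nat)}. P2 0 1 2 H z $$ (r,k) * v $ k) = 0"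
  proof -
    fix r :: nat assume r: "r < 10"
    have "(P2 0 1 2 H z *\<^sub>v v) $ r = 0" using Pv r by simp
    thus "(\<Sum>k\<in>{0..<(10::nat)}. P2 0 1 2 H z $$ (r,k) * v $ k) = 0"
      using r v by (simp add: P2_def scalar_prod_def)
  qed
  have z1: "v$6 = 0" "v$7 = 0" "v$8 = 0" "v$9 = 0"
    using eq[of 0] eq[of 7] eq[of 8] eq[of 9] by (simp_all add: P2_def sum10)
  have "z 2 * v$4 = 0" using eq[of "6"] z1 by (simp add: P2_def sum10)
  hence v4: "v$4 = 0" using zm by simp
  have v13: "v$1 = 0" "v$3 = 0" using eq[of "4"] eq[of "5"] z1 v4 by (simp_all add: P2_def sum10)
  have e1: "H$$(0,0) * v$0 + H$$(0,1) * v$2 = 0" and e2: "H$$(1,0) * v$0 + H$$(1,1) * v$2 = 0"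
    using eq[of "1"] eq[of "2"] z1 v4 v13 by (simp_all add: P2_def sum10 algebra_simps)
  have "(H$$(0,0) * H$$(1,1) - H$$(0,1) * H$$(1,0)) * v$0 = H$$(1,1) * (H$$(0,0) * v$0 + H$$(0,1) * v$2) - H$$(0,1) * (H$$(1,0) * v$0 + H$$(1,1) * v$2)"
    by (simp add: algebra_simps)
  hence "(H$$(0,0) * H$$(1,1) - H$$(0,1) * H$$(1,0)) * v$0 = 0" using e1 e2 by simp
  hence v0: "v$0 = 0" using Mnz by simp
  have "(H$$(0,0) * H$$(1,1) - H$$(0,1) * H$$(1,0)) * v$2 = H$$(0,0) * (H$$(1,0) * v$0 + H$$(1,1) * v$2) - H$$(1,0) * (H$$(0,0) * v$0 + H$$(0,1) * v$2)"
    by (simp add: algebra_simps)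
  hence "(H$$(0,0) * H$$(1,1) - H$$(0,1) * H$$(1,0)) * v$2 = 0" using e1 e2 by simp
  hence v2: "v$2 = 0" using Mnz by simp
  have v5: "v$5 = 0" using eq[of "3"] z1 v4 v13 v0 v2 by (simp add: P2_def sum10)
  show ?thesis
  proof (rule eq_vecI)
    fix i assume "i < dim_vec (0\<^sub>v 10 :: real vec)"
    hence "i = 0 \<or> i = 1 \<or> i = 2 \<or> i = 3 \<or> i = 4 \<or> i = 5 \<or> i = 6 \<or> i = 7 \<or> i = 8 \<or> i = 9" by auto
    thus "v $ i = 0\<^sub>v 10 $ i" using z1 v0 v2 v4 v5 v13 by auto
  qed (use v in auto)
qed

lemma jnf2_012: fixes z :: "nat \<Rightarrow> real" assumes H: "H \<in> carrier_mat 3 3"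
  and Mnz: "H$$(0,0) * H$$(1,1) - H$$(0,1) * H$$(1,0) \<noteq> 0" and zm: "z 2 \<noteq> 0"
  and "H$$(0,0) * z 0 + H$$(0,1) * z 1 + H$$(0,2) * z 2 = 0"
  "H$$(1,0) * z 0 + H$$(1,1) * z 1 + H$$(1,2) * z 2 = 0"
  "H$$(2,0) * z 0 + H$$(2,1) * z 1 + H$$(2,2) * z 2 = 0"
  shows "jordan_nf (Wm H) [(2,0),(2,0),(1,0),(1,0),(1,0),(1,0),(1,0),(1,0)]"
  unfolding jordan_nf_def J2_eq
proof
  show "similar_mat (Wm H) J2"
    by (rule sim_from_intertwine[OF _ _ _ P2_inj_012[where H=H and z=z, OF H Mnz zm] WP2_012[where H=H and z=z]], insert assms, auto simp: Wm_def P2_def J2_def)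
qed simp

lemma WP2_021: fixes z :: "nat \<Rightarrow> real" assumes "H$$(0,0) * z 0 + H$$(0,1) * z 1 + H$$(0,2) * z 2 = 0"
  "H$$(1,0) * z 0 + H$$(1,1) * z 1 + H$$(1,2) * z 2 = 0"
  "H$$(2,0) * z 0 + H$$(2,1) * z 1 + H$$(2,2) * z 2 = 0"
  shows "Wm H * P2 0 2 1 H z = P2 0 2 1 H z * J2"
proof (rule eq_matI)
  fix i j assume "i < dim_row (P2 0 2 1 H z * J2)" "j < dim_col (P2 0 2 1 H z * J2)"
  hence i10: "i = 0 \<or> i = 1 \<or> i = 2 \<or> i = 3 \<or> i = 4 \<or> i = 5 \<or> i = 6 \<or> i = 7 \<or> i = 8 \<or> i = 9"
    and j10: "j = 0 \<or> j = 1 \<or> j = 2 \<or> j = 3 \<or> j = 4 \<or> j = 5 \<or> j = 6 \<or> j = 7 \<or> j = 8 \<or> j = 9" by (auto simp: J2_def P2_def)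
  show "(Wm H * P2 0 2 1 H z) $$ (i,j) = (P2 0 2 1 H z * J2) $$ (i,j)"
    using i10 j10 assms by (elim disjE; simp add: Wm_def P2_def J2_def scalar_prod_def sum10 algebra_simps)
qed (auto simp: J2_def Wm_def P2_def)

lemma P2_inj_021: fixes z :: "nat \<Rightarrow> real" assumes H: "H \<in> carrier_mat 3 3"
  and Mnz: "H$$(0,0) * H$$(2,2) - H$$(0,2) * H$$(2,0) \<noteq> 0" and zm: "z 1 \<noteq> 0"
  and v: "v \<in> carrier_vec 10" and Pv: "P2 0 2 1 H z *\<^sub>v v = 0\<^sub>v 10"
  shows "v = 0\<^sub>v 10"
proof -
  have eq: "\<And>r. r < 10 \<Longrightarrow> (\<Sum>k\<in>{0..<(10::nat)}. P2 0 2 1 H z $$ (r,k) * v $ k) = 0"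
  proof -
    fix r :: nat assume r: "r < 10"
    have "(P2 0 2 1 H z *\<^sub>v v) $ r = 0" using Pv r by simp
    thus "(\<Sum>k\<in>{0..<(10::nat)}. P2 0 2 1 H z $$ (r,k) * v $ k) = 0"
      using r v by (simp add: P2_def scalar_prod_def)
  qed
  have z1: "v$6 = 0" "v$7 = 0" "v$8 = 0" "v$9 = 0"
    using eq[of 0] eq[of 7] eq[of 8] eq[of 9] by (simp_all add: P2_def sum10)
  have "z 1 * v$4 = 0" using eq[of "5"] z1 by (simp add: P2_def sum10)
  hence v4: "v$4 = 0" using zm by simp
  have v13: "v$1 = 0" "v$3 = 0" using eq[of "4"] eq[of "6"] z1 v4 by (simp_all add: P2_def sum10)
  have e1: "H$$(0,0) * v$0 + H$$(0,2) * v$2 = 0" and e2: "H$$(2,0) * v$0 + H$$(2,2) * v$2 = 0"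
    using eq[of "1"] eq[of "3"] z1 v4 v13 by (simp_all add: P2_def sum10 algebra_simps)
  have "(H$$(0,0) * H$$(2,2) - H$$(0,2) * H$$(2,0)) * v$0 = H$$(2,2) * (H$$(0,0) * v$0 + H$$(0,2) * v$2) - H$$(0,2) * (H$$(2,0) * v$0 + H$$(2,2) * v$2)"
    by (simp add: algebra_simps)
  hence "(H$$(0,0) * H$$(2,2) - H$$(0,2) * H$$(2,0)) * v$0 = 0" using e1 e2 by simp
  hence v0: "v$0 = 0" using Mnz by simp
  have "(H$$(0,0) * H$$(2,2) - H$$(0,2) * H$$(2,0)) * v$2 = H$$(0,0) * (H$$(2,0) * v$0 + H$$(2,2) * v$2) - H$$(2,0) * (H$$(0,0) * v$0 + H$$(0,2) * v$2)"
    by (simp add: algebra_simps)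
  hence "(H$$(0,0) * H$$(2,2) - H$$(0,2) * H$$(2,0)) * v$2 = 0" using e1 e2 by simp
  hence v2: "v$2 = 0" using Mnz by simp
  have v5: "v$5 = 0" using eq[of "2"] z1 v4 v13 v0 v2 by (simp add: P2_def sum10)
  show ?thesis
  proof (rule eq_vecI)
    fix i assume "i < dim_vec (0\<^sub>v 10 :: real vec)"
    hence "i = 0 \<or> i = 1 \<or> i = 2 \<or> i = 3 \<or> i = 4 \<or> i = 5 \<or> i = 6 \<or> i = 7 \<or> i = 8 \<or> i = 9" by auto
    thus "v $ i = 0\<^sub>v 10 $ i" using z1 v0 v2 v4 v5 v13 by auto
  qed (use v in auto)
qed

lemma jnf2_021: fixes z :: "nat \<Rightarrow> real" assumes H: "H \<in> carrier_mat 3 3"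
  and Mnz: "H$$(0,0) * H$$(2,2) - H$$(0,2) * H$$(2,0) \<noteq> 0" and zm: "z 1 \<noteq> 0"
  and "H$$(0,0) * z 0 + H$$(0,1) * z 1 + H$$(0,2) * z 2 = 0"
  "H$$(1,0) * z 0 + H$$(1,1) * z 1 + H$$(1,2) * z 2 = 0"
  "H$$(2,0) * z 0 + H$$(2,1) * z 1 + H$$(2,2) * z 2 = 0"
  shows "jordan_nf (Wm H) [(2,0),(2,0),(1,0),(1,0),(1,0),(1,0),(1,0),(1,0)]"
  unfolding jordan_nf_def J2_eq
proof
  show "similar_mat (Wm H) J2"
    by (rule sim_from_intertwine[OF _ _ _ P2_inj_021[where H=H and z=z, OF H Mnz zm] WP2_021[where H=H and z=z]], insert assms, auto simp: Wm_def P2_def J2_def)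
qed simp

lemma WP2_120: fixes z :: "nat \<Rightarrow> real" assumes "H$$(0,0) * z 0 + H$$(0,1) * z 1 + H$$(0,2) * z 2 = 0"
  "H$$(1,0) * z 0 + H$$(1,1) * z 1 + H$$(1,2) * z 2 = 0"
  "H$$(2,0) * z 0 + H$$(2,1) * z 1 + H$$(2,2) * z 2 = 0"
  shows "Wm H * P2 1 2 0 H z = P2 1 2 0 H z * J2"
proof (rule eq_matI)
  fix i j assume "i < dim_row (P2 1 2 0 H z * J2)" "j < dim_col (P2 1 2 0 H z * J2)"
  hence i10: "i = 0 \<or> i = 1 \<or> i = 2 \<or> i = 3 \<or> i = 4 \<or> i = 5 \<or> i = 6 \<or> i = 7 \<or> i = 8 \<or> i = 9"
    and j10: "j = 0 \<or> j = 1 \<or> j = 2 \<or> j = 3 \<or> j = 4 \<or> j = 5 \<or> j = 6 \<or> j = 7 \<or> j = 8 \<or> j = 9" by (auto simp: J2_def P2_def)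
  show "(Wm H * P2 1 2 0 H z) $$ (i,j) = (P2 1 2 0 H z * J2) $$ (i,j)"
    using i10 j10 assms by (elim disjE; simp add: Wm_def P2_def J2_def scalar_prod_def sum10 algebra_simps)
qed (auto simp: J2_def Wm_def P2_def)

lemma P2_inj_120: fixes z :: "nat \<Rightarrow> real" assumes H: "H \<in> carrier_mat 3 3"
  and Mnz: "H$$(1,1) * H$$(2,2) - H$$(1,2) * H$$(2,1) \<noteq> 0" and zm: "z 0 \<noteq> 0"
  and v: "v \<in> carrier_vec 10" and Pv: "P2 1 2 0 H z *\<^sub>v v = 0\<^sub>v 10"
  shows "v = 0\<^sub>v 10"
proof -
  have eq: "\<And>r. r < 10 \<Longrightarrow> (\<Sum>k\<in>{0..<(10::nat)}. P2 1 2 0 H z $$ (r,k) * v $ k) = 0"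
  proof -
    fix r :: nat assume r: "r < 10"
    have "(P2 1 2 0 H z *\<^sub>v v) $ r = 0" using Pv r by simp
    thus "(\<Sum>k\<in>{0..<(10::nat)}. P2 1 2 0 H z $$ (r,k) * v $ k) = 0"
      using r v by (simp add: P2_def scalar_prod_def)
  qed
  have z1: "v$6 = 0" "v$7 = 0" "v$8 = 0" "v$9 = 0"
    using eq[of 0] eq[of 7] eq[of 8] eq[of 9] by (simp_all add: P2_def sum10)
  have "z 0 * v$4 = 0" using eq[of "4"] z1 by (simp add: P2_def sum10)
  hence v4: "v$4 = 0" using zm by simp
  have v13: "v$1 = 0" "v$3 = 0" using eq[of "5"] eq[of "6"] z1 v4 by (simp_all add: P2_def sum10)
  have e1: "H$$(1,1) * v$0 + H$$(1,2) * v$2 = 0" and e2: "H$$(2,1) * v$0 + H$$(2,2) * v$2 = 0"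
    using eq[of "2"] eq[of "3"] z1 v4 v13 by (simp_all add: P2_def sum10 algebra_simps)
  have "(H$$(1,1) * H$$(2,2) - H$$(1,2) * H$$(2,1)) * v$0 = H$$(2,2) * (H$$(1,1) * v$0 + H$$(1,2) * v$2) - H$$(1,2) * (H$$(2,1) * v$0 + H$$(2,2) * v$2)"
    by (simp add: algebra_simps)
  hence "(H$$(1,1) * H$$(2,2) - H$$(1,2) * H$$(2,1)) * v$0 = 0" using e1 e2 by simp
  hence v0: "v$0 = 0" using Mnz by simp
  have "(H$$(1,1) * H$$(2,2) - H$$(1,2) * H$$(2,1)) * v$2 = H$$(1,1) * (H$$(2,1) * v$0 + H$$(2,2) * v$2) - H$$(2,1) * (H$$(1,1) * v$0 + H$$(1,2) * v$2)"
    by (simp add: algebra_simps)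
  hence "(H$$(1,1) * H$$(2,2) - H$$(1,2) * H$$(2,1)) * v$2 = 0" using e1 e2 by simp
  hence v2: "v$2 = 0" using Mnz by simp
  have v5: "v$5 = 0" using eq[of "1"] z1 v4 v13 v0 v2 by (simp add: P2_def sum10)
  show ?thesis
  proof (rule eq_vecI)
    fix i assume "i < dim_vec (0\<^sub>v 10 :: real vec)"
    hence "i = 0 \<or> i = 1 \<or> i = 2 \<or> i = 3 \<or> i = 4 \<or> i = 5 \<or> i = 6 \<or> i = 7 \<or> i = 8 \<or> i = 9" by auto
    thus "v $ i = 0\<^sub>v 10 $ i" using z1 v0 v2 v4 v5 v13 by auto
  qed (use v in auto)
qed

lemma jnf2_120: fixes z :: "nat \<Rightarrow> real" assumes H: "H \<in> carrier_mat 3 3"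
  and Mnz: "H$$(1,1) * H$$(2,2) - H$$(1,2) * H$$(2,1) \<noteq> 0" and zm: "z 0 \<noteq> 0"
  and "H$$(0,0) * z 0 + H$$(0,1) * z 1 + H$$(0,2) * z 2 = 0"
  "H$$(1,0) * z 0 + H$$(1,1) * z 1 + H$$(1,2) * z 2 = 0"
  "H$$(2,0) * z 0 + H$$(2,1) * z 1 + H$$(2,2) * z 2 = 0"
  shows "jordan_nf (Wm H) [(2,0),(2,0),(1,0),(1,0),(1,0),(1,0),(1,0),(1,0)]"
  unfolding jordan_nf_def J2_eq
proof
  show "similar_mat (Wm H) J2"
    by (rule sim_from_intertwine[OF _ _ _ P2_inj_120[where H=H and z=z, OF H Mnz zm] WP2_120[where H=H and z=z]], insert assms, auto simp: Wm_def P2_def J2_def)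
qed simp


lemma pick2: assumes "a < (b::nat)" shows "pick {a,b} 0 = a" "pick {a,b} 1 = b"
proof -
  show p0: "pick {a,b} 0 = a" using assms by (auto intro!: Least_equality)
  show "pick {a,b} 1 = b" using assms p0 by (auto intro!: Least_equality)
qed

lemma pick3: assumes "a < (b::nat)" "b < c" shows "pick {a,b,c} 0 = a" "pick {a,b,c} 1 = b" "pick {a,b,c} 2 = c"
proof -
  show p0: "pick {a,b,c} 0 = a" using assms by (auto intro!: Least_equality)
  show p1: "pick {a,b,c} 1 = b" using assms p0 by (auto intro!: Least_equality)
  have "pick {a,b,c} (Suc 1) = (LEAST x. x \<in> {a,b,c} \<and> x > pick {a,b,c} 1)" by (rule pick.simps(2))
  also have "\<dots> = c" unfolding p1 using assms by (auto intro!: Least_equality)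
  finally show "pick {a,b,c} 2 = c" by (simp add: numeral_2_eq_2)
qed

lemma card_sel: "finite I \<Longrightarrow> I \<subseteq> {..<n} \<Longrightarrow> {i. i < n \<and> i \<in> I} = I" by auto

lemma minor2_ge:
  fixes A :: "real mat"
  assumes A: "A \<in> carrier_mat n nc" and ab: "a < b" "b < n" and cd: "c < d" "d < nc"
    and M: "A$$(a,c) * A$$(b,d) - A$$(a,d) * A$$(b,c) \<noteq> 0"
  shows "2 \<le> vec_space.rank n A"
proof -
  have I: "{i. i < dim_row A \<and> i \<in> {a,b}} = {a,b}" and J: "{j. j < dim_col A \<and> j \<in> {c,d}} = {c,d}"
    using A ab cd by auto
  have cI: "card {a,b} = 2" "card {c,d} = 2" using ab cd by auto
  have d1: "dim_row (submatrix A {a,b} {c,d}) = 2" by (simp only: dim_submatrix I cI)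
  have d2: "dim_col (submatrix A {a,b} {c,d}) = 2" by (simp only: dim_submatrix J cI)
  have S: "submatrix A {a,b} {c,d} \<in> carrier_mat 2 2" using d1 d2 by auto
  have "det (submatrix A {a,b} {c,d}) = A$$(a,c) * A$$(b,d) - A$$(a,d) * A$$(b,c)"
    unfolding det2[OF S] using I J cI pick2[OF ab(1)] pick2[OF cd(1)]
    by (simp add: submatrix_index)
  hence "card {j. j < nc \<and> j \<in> {c,d}} \<le> vec_space.rank n A"
    using vec_space.rank_gt_minor[OF A] M by metis
  moreover have "{j. j < nc \<and> j \<in> {c,d}} = {c,d}" using cd by auto
  ultimately show ?thesis using cI by simp
qed

lemma minor3_ge:
  fixes A :: "real mat"
  assumes A: "A \<in> carrier_mat n nc" and ab: "a1 < a2" "a2 < a3" "a3 < n" and cd: "c1 < c2" "c2 < c3" "c3 < nc"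
    and M: "det (mat 3 3 (\<lambda>(i,j). A $$ ([a1,a2,a3]!i, [c1,c2,c3]!j))) \<noteq> 0"
  shows "3 \<le> vec_space.rank n A"
proof -
  have I: "{i. i < dim_row A \<and> i \<in> {a1,a2,a3}} = {a1,a2,a3}" and J: "{j. j < dim_col A \<and> j \<in> {c1,c2,c3}} = {c1,c2,c3}"
    using A ab cd by auto
  have cI: "card {a1,a2,a3} = 3" "card {c1,c2,c3} = 3" using ab cd by auto
  have "submatrix A {a1,a2,a3} {c1,c2,c3} = mat 3 3 (\<lambda>(i,j). A $$ ([a1,a2,a3]!i, [c1,c2,c3]!j))"
  proof (rule eq_matI)
    fix i j assume "i < dim_row (mat 3 3 (\<lambda>(i,j). A $$ ([a1,a2,a3]!i, [c1,c2,c3]!j)))"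
      "j < dim_col (mat 3 3 (\<lambda>(i,j). A $$ ([a1,a2,a3]!i, [c1,c2,c3]!j)))"
    hence "i = 0 \<or> i = 1 \<or> i = 2" "j = 0 \<or> j = 1 \<or> j = 2" by auto
    thus "submatrix A {a1,a2,a3} {c1,c2,c3} $$ (i,j) = mat 3 3 (\<lambda>(i,j). A $$ ([a1,a2,a3]!i, [c1,c2,c3]!j)) $$ (i,j)"
      using I J cI pick3[OF ab(1,2)] pick3[OF cd(1,2)]
      by (elim disjE; simp add: submatrix_index)
  next
    show "dim_row (submatrix A {a1,a2,a3} {c1,c2,c3}) = dim_row (mat 3 3 (\<lambda>(i,j). A $$ ([a1,a2,a3]!i, [c1,c2,c3]!j)))"
      by (simp only: dim_submatrix I cI dim_row_mat)
    show "dim_col (submatrix A {a1,a2,a3} {c1,c2,c3}) = dim_col (mat 3 3 (\<lambda>(i,j). A $$ ([a1,a2,a3]!i, [c1,c2,c3]!j)))"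
      by (simp only: dim_submatrix J cI dim_col_mat)
  qed
  hence "card {j. j < nc \<and> j \<in> {c1,c2,c3}} \<le> vec_space.rank n A"
    using vec_space.rank_gt_minor[OF A] M by metis
  moreover have "{j. j < nc \<and> j \<in> {c1,c2,c3}} = {c1,c2,c3}" using cd by auto
  ultimately show ?thesis using cI by simp
qed

lemma rank_le_prod:
  fixes A :: "real mat"
  assumes "A = mat n nc (\<lambda>(i,j). f i * g j)"
  shows "vec_space.rank n A \<le> 1"
  by (rule vec_space.rank_le_1_product_entries[of A n nc f g], insert assms, auto)

lemma rank_Wm_le3: "vec_space.rank 10 (Wm H) \<le> 3"
proof -
  define A where "A k = mat 10 10 (\<lambda>(i,j). (if 1 \<le> i \<and> i < 4 then H $$ (i-1,k) else 0) * (if j = 4+k then 1 else (0::real)))" for k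
  have r: "vec_space.rank 10 (A k) \<le> 1" for k unfolding A_def by (rule rank_le_prod, simp)
  have c: "A k \<in> carrier_mat 10 10" for k unfolding A_def by simp
  have "Wm H = A 0 + A 1 + A 2"
    by (rule eq_matI, auto simp: Wm_def A_def)
  hence "vec_space.rank 10 (Wm H) \<le> vec_space.rank 10 (A 0 + A 1) + vec_space.rank 10 (A 2)"
    using vec_space.rank_subadditive[of "A 0 + A 1" 10 10 "A 2"] c by simp
  also have "\<dots> \<le> vec_space.rank 10 (A 0) + vec_space.rank 10 (A 1) + vec_space.rank 10 (A 2)"
    using vec_space.rank_subadditive[of "A 0" 10 10 "A 1"] c by simp
  finally show ?thesis using r[of 0] r[of 1] r[of 2] by simp
qed


lemma rank_Wm_le2_012: fixes z :: "nat \<Rightarrow> real"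
  assumes "H$$(0,0) * z 0 + H$$(0,1) * z 1 + H$$(0,2) * z 2 = 0"
  "H$$(1,0) * z 0 + H$$(1,1) * z 1 + H$$(1,2) * z 2 = 0"
  "H$$(2,0) * z 0 + H$$(2,1) * z 1 + H$$(2,2) * z 2 = 0"
  and zm: "z 2 \<noteq> 0"
  shows "vec_space.rank 10 (Wm H) \<le> 2"
proof -
  define A where "A k = mat 10 10 (\<lambda>(i,j). (if 1 \<le> i \<and> i < 4 then H $$ (i-1,k) else 0) * (if j = 4+k then 1 else if j = 6 then - z k / z 2 else (0::real)))" for k
  have r: "vec_space.rank 10 (A k) \<le> 1" for k unfolding A_def by (rule rank_le_prod, simp)
  have c: "A k \<in> carrier_mat 10 10" for k unfolding A_def by simp
  have "Wm H = A 0 + A 1"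
  proof (rule eq_matI)
    fix i j assume "i < dim_row (A 0 + A 1)" "j < dim_col (A 0 + A 1)"
    hence i10: "i = 0 \<or> i = 1 \<or> i = 2 \<or> i = 3 \<or> i = 4 \<or> i = 5 \<or> i = 6 \<or> i = 7 \<or> i = 8 \<or> i = 9"
      and j10: "j = 0 \<or> j = 1 \<or> j = 2 \<or> j = 3 \<or> j = 4 \<or> j = 5 \<or> j = 6 \<or> j = 7 \<or> j = 8 \<or> j = 9" by (auto simp: A_def)
    show "Wm H $$ (i,j) = (A 0 + A 1) $$ (i,j)"
      using i10 j10 assms by (elim disjE; simp add: Wm_def A_def field_simps)
  qed (auto simp: Wm_def A_def)
  hence "vec_space.rank 10 (Wm H) \<le> vec_space.rank 10 (A 0) + vec_space.rank 10 (A 1)"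
    using vec_space.rank_subadditive[of "A 0" 10 10 "A 1"] c by simp
  thus ?thesis using r[of 0] r[of 1] by simp
qed

lemma rank2_012: assumes H: "H \<in> carrier_mat 3 3"
  and Mnz: "H$$(0,0) * H$$(1,1) - H$$(0,1) * H$$(1,0) \<noteq> 0" and dH: "det H = 0"
  shows "vec_space.rank 10 (Wm H) = 2 \<and> jordan_nf (Wm H) [(2,0),(2,0),(1,0),(1,0),(1,0),(1,0),(1,0),(1,0)]"
proof -
  define z :: "nat \<Rightarrow> real" where "z i = (if i = 0 then H$$(0,1) * H$$(1,2) - H$$(0,2) * H$$(1,1)
     else if i = 1 then H$$(0,2) * H$$(1,0) - H$$(0,0) * H$$(1,2) else H$$(0,0) * H$$(1,1) - H$$(0,1) * H$$(1,0))" for i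
  have d: "H$$(0,0) * (H$$(1,1) * H$$(2,2) - H$$(1,2) * H$$(2,1))
     - H$$(1,0) * (H$$(0,1) * H$$(2,2) - H$$(0,2) * H$$(2,1))
     + H$$(2,0) * (H$$(0,1) * H$$(1,2) - H$$(0,2) * H$$(1,1)) = 0" using dH det3[OF H] by simp
  have e: "H$$(0,0) * z 0 + H$$(0,1) * z 1 + H$$(0,2) * z 2 = 0"
  "H$$(1,0) * z 0 + H$$(1,1) * z 1 + H$$(1,2) * z 2 = 0"
  "H$$(2,0) * z 0 + H$$(2,1) * z 1 + H$$(2,2) * z 2 = 0"
    using d unfolding z_def apply simp_all
    apply (simp add: algebra_simps)
    apply (simp add: algebra_simps)
    using d apply (simp add: algebra_simps)
    done
  have zm: "z 2 \<noteq> 0" using Mnz unfolding z_def by (simp add: algebra_simps)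
  have W: "Wm H \<in> carrier_mat 10 10" by (simp add: Wm_def)
  have "2 \<le> vec_space.rank 10 (Wm H)"
    by (rule minor2_ge[OF W, of "1" "2" "4" "5"], insert Mnz, auto simp: Wm_def)
  moreover have "vec_space.rank 10 (Wm H) \<le> 2" by (rule rank_Wm_le2_012[OF e zm])
  moreover have "jordan_nf (Wm H) [(2,0),(2,0),(1,0),(1,0),(1,0),(1,0),(1,0),(1,0)]"
    by (rule jnf2_012[OF H Mnz zm e])
  ultimately show ?thesis by simp
qed

lemma rank_Wm_le2_021: fixes z :: "nat \<Rightarrow> real"
  assumes "H$$(0,0) * z 0 + H$$(0,1) * z 1 + H$$(0,2) * z 2 = 0"
  "H$$(1,0) * z 0 + H$$(1,1) * z 1 + H$$(1,2) * z 2 = 0"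
  "H$$(2,0) * z 0 + H$$(2,1) * z 1 + H$$(2,2) * z 2 = 0"
  and zm: "z 1 \<noteq> 0"
  shows "vec_space.rank 10 (Wm H) \<le> 2"
proof -
  define A where "A k = mat 10 10 (\<lambda>(i,j). (if 1 \<le> i \<and> i < 4 then H $$ (i-1,k) else 0) * (if j = 4+k then 1 else if j = 5 then - z k / z 1 else (0::real)))" for k
  have r: "vec_space.rank 10 (A k) \<le> 1" for k unfolding A_def by (rule rank_le_prod, simp)
  have c: "A k \<in> carrier_mat 10 10" for k unfolding A_def by simp
  have "Wm H = A 0 + A 2"
  proof (rule eq_matI)
    fix i j assume "i < dim_row (A 0 + A 2)" "j < dim_col (A 0 + A 2)"
    hence i10: "i = 0 \<or> i = 1 \<or> i = 2 \<or> i = 3 \<or> i = 4 \<or> i = 5 \<or> i = 6 \<or> i = 7 \<or> i = 8 \<or> i = 9"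
      and j10: "j = 0 \<or> j = 1 \<or> j = 2 \<or> j = 3 \<or> j = 4 \<or> j = 5 \<or> j = 6 \<or> j = 7 \<or> j = 8 \<or> j = 9" by (auto simp: A_def)
    show "Wm H $$ (i,j) = (A 0 + A 2) $$ (i,j)"
      using i10 j10 assms by (elim disjE; simp add: Wm_def A_def field_simps)
  qed (auto simp: Wm_def A_def)
  hence "vec_space.rank 10 (Wm H) \<le> vec_space.rank 10 (A 0) + vec_space.rank 10 (A 2)"
    using vec_space.rank_subadditive[of "A 0" 10 10 "A 2"] c by simp
  thus ?thesis using r[of 0] r[of 2] by simp
qed

lemma rank2_021: assumes H: "H \<in> carrier_mat 3 3"
  and Mnz: "H$$(0,0) * H$$(2,2) - H$$(0,2) * H$$(2,0) \<noteq> 0" and dH: "det H = 0"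
  shows "vec_space.rank 10 (Wm H) = 2 \<and> jordan_nf (Wm H) [(2,0),(2,0),(1,0),(1,0),(1,0),(1,0),(1,0),(1,0)]"
proof -
  define z :: "nat \<Rightarrow> real" where "z i = (if i = 0 then H$$(0,1) * H$$(2,2) - H$$(0,2) * H$$(2,1)
     else if i = 1 then H$$(0,2) * H$$(2,0) - H$$(0,0) * H$$(2,2) else H$$(0,0) * H$$(2,1) - H$$(0,1) * H$$(2,0))" for i
  have d: "H$$(0,0) * (H$$(1,1) * H$$(2,2) - H$$(1,2) * H$$(2,1))
     - H$$(1,0) * (H$$(0,1) * H$$(2,2) - H$$(0,2) * H$$(2,1))
     + H$$(2,0) * (H$$(0,1) * H$$(1,2) - H$$(0,2) * H$$(1,1)) = 0" using dH det3[OF H] by simp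
  have e: "H$$(0,0) * z 0 + H$$(0,1) * z 1 + H$$(0,2) * z 2 = 0"
  "H$$(1,0) * z 0 + H$$(1,1) * z 1 + H$$(1,2) * z 2 = 0"
  "H$$(2,0) * z 0 + H$$(2,1) * z 1 + H$$(2,2) * z 2 = 0"
    using d unfolding z_def apply simp_all
    apply (simp add: algebra_simps)
    apply (simp add: algebra_simps)
    using d apply (simp add: algebra_simps)
    done
  have zm: "z 1 \<noteq> 0" using Mnz unfolding z_def by (simp add: algebra_simps)
  have W: "Wm H \<in> carrier_mat 10 10" by (simp add: Wm_def)
  have "2 \<le> vec_space.rank 10 (Wm H)"
    by (rule minor2_ge[OF W, of "1" "3" "4" "6"], insert Mnz, auto simp: Wm_def)
  moreover have "vec_space.rank 10 (Wm H) \<le> 2" by (rule rank_Wm_le2_021[OF e zm])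
  moreover have "jordan_nf (Wm H) [(2,0),(2,0),(1,0),(1,0),(1,0),(1,0),(1,0),(1,0)]"
    by (rule jnf2_021[OF H Mnz zm e])
  ultimately show ?thesis by simp
qed

lemma rank_Wm_le2_120: fixes z :: "nat \<Rightarrow> real"
  assumes "H$$(0,0) * z 0 + H$$(0,1) * z 1 + H$$(0,2) * z 2 = 0"
  "H$$(1,0) * z 0 + H$$(1,1) * z 1 + H$$(1,2) * z 2 = 0"
  "H$$(2,0) * z 0 + H$$(2,1) * z 1 + H$$(2,2) * z 2 = 0"
  and zm: "z 0 \<noteq> 0"
  shows "vec_space.rank 10 (Wm H) \<le> 2"
proof -
  define A where "A k = mat 10 10 (\<lambda>(i,j). (if 1 \<le> i \<and> i < 4 then H $$ (i-1,k) else 0) * (if j = 4+k then 1 else if j = 4 then - z k / z 0 else (0::real)))" for k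
  have r: "vec_space.rank 10 (A k) \<le> 1" for k unfolding A_def by (rule rank_le_prod, simp)
  have c: "A k \<in> carrier_mat 10 10" for k unfolding A_def by simp
  have "Wm H = A 1 + A 2"
  proof (rule eq_matI)
    fix i j assume "i < dim_row (A 1 + A 2)" "j < dim_col (A 1 + A 2)"
    hence i10: "i = 0 \<or> i = 1 \<or> i = 2 \<or> i = 3 \<or> i = 4 \<or> i = 5 \<or> i = 6 \<or> i = 7 \<or> i = 8 \<or> i = 9"
      and j10: "j = 0 \<or> j = 1 \<or> j = 2 \<or> j = 3 \<or> j = 4 \<or> j = 5 \<or> j = 6 \<or> j = 7 \<or> j = 8 \<or> j = 9" by (auto simp: A_def)
    show "Wm H $$ (i,j) = (A 1 + A 2) $$ (i,j)"
      using i10 j10 assms by (elim disjE; simp add: Wm_def A_def field_simps)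
  qed (auto simp: Wm_def A_def)
  hence "vec_space.rank 10 (Wm H) \<le> vec_space.rank 10 (A 1) + vec_space.rank 10 (A 2)"
    using vec_space.rank_subadditive[of "A 1" 10 10 "A 2"] c by simp
  thus ?thesis using r[of 1] r[of 2] by simp
qed

lemma rank2_120: assumes H: "H \<in> carrier_mat 3 3"
  and Mnz: "H$$(1,1) * H$$(2,2) - H$$(1,2) * H$$(2,1) \<noteq> 0" and dH: "det H = 0"
  shows "vec_space.rank 10 (Wm H) = 2 \<and> jordan_nf (Wm H) [(2,0),(2,0),(1,0),(1,0),(1,0),(1,0),(1,0),(1,0)]"
proof -
  define z :: "nat \<Rightarrow> real" where "z i = (if i = 0 then H$$(1,1) * H$$(2,2) - H$$(1,2) * H$$(2,1)
     else if i = 1 then H$$(1,2) * H$$(2,0) - H$$(1,0) * H$$(2,2) else H$$(1,0) * H$$(2,1) - H$$(1,1) * H$$(2,0))" for i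
  have d: "H$$(0,0) * (H$$(1,1) * H$$(2,2) - H$$(1,2) * H$$(2,1))
     - H$$(1,0) * (H$$(0,1) * H$$(2,2) - H$$(0,2) * H$$(2,1))
     + H$$(2,0) * (H$$(0,1) * H$$(1,2) - H$$(0,2) * H$$(1,1)) = 0" using dH det3[OF H] by simp
  have e: "H$$(0,0) * z 0 + H$$(0,1) * z 1 + H$$(0,2) * z 2 = 0"
  "H$$(1,0) * z 0 + H$$(1,1) * z 1 + H$$(1,2) * z 2 = 0"
  "H$$(2,0) * z 0 + H$$(2,1) * z 1 + H$$(2,2) * z 2 = 0"
    using d unfolding z_def apply simp_all
    apply (simp add: algebra_simps)
    apply (simp add: algebra_simps)
    using d apply (simp add: algebra_simps)
    done
  have zm: "z 0 \<noteq> 0" using Mnz unfolding z_def by (simp add: algebra_simps)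
  have W: "Wm H \<in> carrier_mat 10 10" by (simp add: Wm_def)
  have "2 \<le> vec_space.rank 10 (Wm H)"
    by (rule minor2_ge[OF W, of "2" "3" "5" "6"], insert Mnz, auto simp: Wm_def)
  moreover have "vec_space.rank 10 (Wm H) \<le> 2" by (rule rank_Wm_le2_120[OF e zm])
  moreover have "jordan_nf (Wm H) [(2,0),(2,0),(1,0),(1,0),(1,0),(1,0),(1,0),(1,0)]"
    by (rule jnf2_120[OF H Mnz zm e])
  ultimately show ?thesis by simp
qed


lemma npair0: "npair 0 y = (0,0)" "npair x 0 = (0,0)" unfolding npair_def by auto

lemma weylN_nz: "weylN H x y c d \<noteq> 0 \<Longrightarrow> (c = 1 \<and> d < 5) \<or> (d = 1 \<and> c < 5)"
  unfolding weylN_def npair_def by (auto split: if_splits)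

lemma weyl_op_1: assumes "(c = 1 \<and> d < 5) \<or> (d = 1 \<and> c < 5)" shows "weyl_op H F c d = 0"
proof -
  have cd: "c < 5" "d < 5" using assms by auto
  have "sw c = 0 \<or> sw d = 0" using assms by (auto simp: sw_def)
  hence "\<And>e f. weylN H (sw c) (sw d) e f = 0" unfolding weylN_def using npair0 by auto
  thus ?thesis by (simp add: weyl_op_eq[OF cd])
qed

lemma C2: "weyl_op H (weyl_op H F) = (\<lambda>a b. 0)"
proof (intro ext)
  fix a b
  show "weyl_op H (weyl_op H F) a b = 0"
  proof (cases "a < 5 \<and> b < 5")
    case True
    have "\<And>c d. weylN H (sw a) (sw b) c d * weyl_op H F c d = 0"
    proof -
      fix c d
      show "weylN H (sw a) (sw b) c d * weyl_op H F c d = 0"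
      proof (cases "weylN H (sw a) (sw b) c d = 0")
        case False
        then show ?thesis using weylN_nz weyl_op_1 by simp
      qed simp
    qed
    moreover have "weyl_op H (weyl_op H F) a b = 1/2 * (\<Sum>c<5. \<Sum>d<5. weylN H (sw a) (sw b) c d * weyl_op H F c d)"
      using True weyl_op_eq by blast
    ultimately show ?thesis by simp
  next
    case False
    hence "\<And>e f. ginv a e * ginv b f = 0" unfolding ginv_def by auto
    thus ?thesis unfolding weyl_op_def by simp
  qed
qed

theorem mainTheorem2:
  fixes H :: "real mat"
  assumes "H \<in> carrier_mat 3 3"
    and "transpose_mat H = H"
    and "H $$ (0,0) + H $$ (1,1) + H $$ (2,2) = 0"
    and "H \<noteq> 0\<^sub>m 3 3"
  shows "(\<forall>F \<in> bivectors. weyl_op H (weyl_op H F) = (\<lambda>a b. 0))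
    \<and> vec_space.rank 10 (weyl_mat H) = vec_space.rank 3 H
    \<and> vec_space.rank 3 H \<in> {2, 3}
    \<and> (vec_space.rank 3 H = 3 \<longleftrightarrow> (\<forall>k. eigenvalue H k \<longrightarrow> k \<noteq> 0))
    \<and> (vec_space.rank 3 H = 3 \<longrightarrow>
         jordan_nf (weyl_mat H) [(2,0),(2,0),(2,0),(1,0),(1,0),(1,0),(1,0)])
    \<and> (vec_space.rank 3 H = 2 \<longleftrightarrow>
         (\<exists>a::real. a \<noteq> 0 \<and> {k. eigenvalue H k} = {a, -a, 0}))
    \<and> (vec_space.rank 3 H = 2 \<longrightarrow>
         jordan_nf (weyl_mat H) [(2,0),(2,0),(1,0),(1,0),(1,0),(1,0),(1,0),(1,0)])"
proof -
  note Hc = assms(1)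
  have sym: "H$$(j,i) = H$$(i,j)" if "i < 3" "j < 3" for i j
  proof -
    have "H$$(j,i) = transpose_mat H $$ (i,j)" using that Hc by simp
    thus ?thesis using assms(2) by simp
  qed
  have s10: "H$$(1,0) = H$$(0,1)" and s20: "H$$(2,0) = H$$(0,2)" and s21: "H$$(2,1) = H$$(1,2)"
    using sym by auto
  have s10s: "H$$(Suc 0,0) = H$$(0,Suc 0)" and s21s: "H$$(2,Suc 0) = H$$(Suc 0,2)" using s10 s21 by simp_all
  have tr: "H$$(2,2) = - H$$(0,0) - H$$(1,1)" using assms(3) by simp
  define Qv where "Qv = H$$(0,1)^2 + H$$(0,2)^2 + H$$(1,2)^2 - (H$$(0,0) * H$$(1,1) + H$$(0,0) * H$$(2,2) + H$$(1,1) * H$$(2,2))"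
  have Qv_eq: "Qv = ((H$$(0,0) + H$$(1,1))^2 + H$$(0,0)^2 + H$$(1,1)^2)/2 + H$$(0,1)^2 + H$$(0,2)^2 + H$$(1,2)^2"
    unfolding Qv_def tr by (simp add: power2_eq_square algebra_simps)
  have Qpos: "Qv > 0"
  proof (rule ccontr)
    assume "\<not> Qv > 0"
    moreover have "Qv \<ge> 0" unfolding Qv_eq by (intro add_nonneg_nonneg; simp)
    ultimately have "Qv = 0" by simp
    hence z: "H$$(0,0) = 0" "H$$(1,1) = 0" "H$$(0,1) = 0" "H$$(0,2) = 0" "H$$(1,2) = 0"
      unfolding Qv_eq by (auto simp: add_nonneg_eq_0_iff)
    have "H = 0\<^sub>m 3 3"
    proof (rule eq_matI)
      fix i j assume "i < dim_row (0\<^sub>m 3 3 :: real mat)" "j < dim_col (0\<^sub>m 3 3 :: real mat)"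
      hence "i = 0 \<or> i = 1 \<or> i = 2" "j = 0 \<or> j = 1 \<or> j = 2" by auto
      thus "H $$ (i,j) = 0\<^sub>m 3 3 $$ (i,j)" using z s10 s20 s21 tr by (elim disjE; simp)
    qed (use Hc in auto)
    thus False using assms(4) by simp
  qed
  have cm: "char_matrix H k \<in> carrier_mat 3 3" for k using Hc by (simp add: char_matrix_def)
  have charp: "det (char_matrix H k) = - (k^3) + Qv * k + det H" for k
    unfolding det3[OF cm] det3[OF Hc] Qv_def using Hc
    by (simp add: char_matrix_def s10 s20 s21 s10s s21s tr power2_eq_square power3_eq_cube algebra_simps)
  have eig: "eigenvalue H k \<longleftrightarrow> - (k^3) + Qv * k + det H = 0" for k
    using eigenvalue_det[OF Hc] charp by simp
  have W: "weyl_mat H = Wm H" by (rule weyl_mat_eq)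
  have Wc: "Wm H \<in> carrier_mat 10 10" by (simp add: Wm_def)
  have part1: "\<forall>F \<in> bivectors. weyl_op H (weyl_op H F) = (\<lambda>a b. 0)" using C2 by simp
  have r3: "vec_space.rank 3 H = 3 \<longleftrightarrow> det H \<noteq> 0" using vec_space.det_rank_iff[OF Hc] by simp
  show ?thesis
  proof (cases "det H = 0")
    case False
    have rH: "vec_space.rank 3 H = 3" using r3 False by simp
    have "mat 3 3 (\<lambda>(i,j). Wm H $$ ([1,2,3]!i, [4,5,6]!j)) = H"
    proof (rule eq_matI)
      fix i j assume "i < dim_row H" "j < dim_col H"
      hence "i = 0 \<or> i = 1 \<or> i = 2" "j = 0 \<or> j = 1 \<or> j = 2" using Hc by auto
      thus "mat 3 3 (\<lambda>(i,j). Wm H $$ ([1,2,3]!i, [4,5,6]!j)) $$ (i,j) = H $$ (i,j)"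
        by (elim disjE; simp add: Wm_def)
    qed (use Hc in auto)
    hence "3 \<le> vec_space.rank 10 (Wm H)"
      using minor3_ge[OF Wc, of 1 2 3 4 5 6] False by simp
    hence rW: "vec_space.rank 10 (Wm H) = 3" using rank_Wm_le3[of H] by simp
    have j: "jordan_nf (Wm H) [(2,0),(2,0),(2,0),(1,0),(1,0),(1,0),(1,0)]" by (rule jnf3[OF Hc False])
    have e0: "\<not> eigenvalue H 0" using eig False by simp
    have "\<forall>k. eigenvalue H k \<longrightarrow> k \<noteq> 0" using e0 by auto
    moreover have "\<not> (\<exists>a::real. a \<noteq> 0 \<and> {k. eigenvalue H k} = {a, -a, 0})"
      using e0 by auto
    ultimately show ?thesis using part1 rH rW j W by simp
  next
    case True
    have rH3: "vec_space.rank 3 H < 3" using vec_space.det_zero_low_rank[OF Hc True] .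
    have msum: "(H$$(0,0) * H$$(1,1) - H$$(0,1) * H$$(1,0)) + (H$$(0,0) * H$$(2,2) - H$$(0,2) * H$$(2,0))
       + (H$$(1,1) * H$$(2,2) - H$$(1,2) * H$$(2,1)) = - Qv"
      unfolding Qv_def s10 s20 s21 by (simp add: power2_eq_square)
    have minors: "(H$$(0,0) * H$$(1,1) - H$$(0,1) * H$$(1,0)) \<noteq> 0 \<or> (H$$(0,0) * H$$(2,2) - H$$(0,2) * H$$(2,0)) \<noteq> 0
       \<or> (H$$(1,1) * H$$(2,2) - H$$(1,2) * H$$(2,1)) \<noteq> 0"
      using msum Qpos by auto
    have rW: "vec_space.rank 10 (Wm H) = 2 \<and> jordan_nf (Wm H) [(2,0),(2,0),(1,0),(1,0),(1,0),(1,0),(1,0),(1,0)]"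
      using minors
    proof (elim disjE)
      assume "H$$(0,0) * H$$(1,1) - H$$(0,1) * H$$(1,0) \<noteq> 0"
      thus ?thesis by (rule rank2_012[OF Hc _ True])
    next
      assume "H$$(0,0) * H$$(2,2) - H$$(0,2) * H$$(2,0) \<noteq> 0"
      thus ?thesis by (rule rank2_021[OF Hc _ True])
    next
      assume "H$$(1,1) * H$$(2,2) - H$$(1,2) * H$$(2,1) \<noteq> 0"
      thus ?thesis by (rule rank2_120[OF Hc _ True])
    qed
    have "2 \<le> vec_space.rank 3 H"
      using minors
    proof (elim disjE)
      assume "H$$(0,0) * H$$(1,1) - H$$(0,1) * H$$(1,0) \<noteq> 0"
      thus ?thesis by (intro minor2_ge[OF Hc, of 0 1 0 1]) auto
    next
      assume "H$$(0,0) * H$$(2,2) - H$$(0,2) * H$$(2,0) \<noteq> 0"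
      thus ?thesis by (intro minor2_ge[OF Hc, of 0 2 0 2]) auto
    next
      assume "H$$(1,1) * H$$(2,2) - H$$(1,2) * H$$(2,1) \<noteq> 0"
      thus ?thesis by (intro minor2_ge[OF Hc, of 1 2 1 2]) auto
    qed
    hence rH: "vec_space.rank 3 H = 2" using rH3 by simp
    have e0: "eigenvalue H 0" using eig True by simp
    define a where "a = sqrt Qv"
    have a0: "a > 0" using Qpos unfolding a_def by simp
    have aQ: "a^2 = Qv" using Qpos unfolding a_def by simp
    have "{k. eigenvalue H k} = {a, -a, 0}"
    proof -
      have "eigenvalue H k \<longleftrightarrow> k * (a - k) * (a + k) = 0" for k
        unfolding eig True aQ[symmetric] by (simp add: algebra_simps power2_eq_square power3_eq_cube)
      moreover have "k * (a - k) * (a + k) = 0 \<longleftrightarrow> k = a \<or> k = -a \<or> k = 0" for k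
        by (auto simp: add_eq_0_iff)
      ultimately show ?thesis by blast
    qed
    hence ex: "\<exists>a::real. a \<noteq> 0 \<and> {k. eigenvalue H k} = {a, -a, 0}" using a0 by (intro exI[of _ a]) auto
    have ne: "\<not> (\<forall>k. eigenvalue H k \<longrightarrow> k \<noteq> 0)" using e0 by blast
    show ?thesis using part1 rH rW W ex ne by simp
  qed
qed


end
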